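(* Let $m$ be a positive integer. If $C$ is a ternary extremal self-dual code of length $12m$, then $B_{3i}\equiv 0 \pmod 8$ for every $i=m+1,m+2,\ldots,4m$, where $B_{j}$ denotes the number of codewords of weight $j$ in $C$.
   Context: A ternary code of length $n$ is a linear subspace of $\mathbb{F}_3^n$; it is self-dual if it equals its dual with respect to the standard inner product $\sum_k x_k y_k$. The weight of a vector is the number of its nonzero coordinates. A ternary self-dual code of length $n$ is extremal if its minimum (nonzero) weight equals $3\lfloor n/12\rfloor+3$; for length $12m$ this is $3m+3$. *)

theory Defs
  imports "HOL-Library.Numeral_Type"
begin

text \<open>The field F_3 is represented by the numeral type 3 (integers mod 3).
  A word of length n is a function nat to 3 vanishing outside {..<n}.\<close>

definition words :: "nat \<Rightarrow> (nat \<Rightarrow> 3) set" where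
  "words n = {x. \<forall>k\<ge>n. x k = 0}"

definition ternary_code :: "nat \<Rightarrow> (nat \<Rightarrow> 3) set \<Rightarrow> bool" where
  "ternary_code n C \<longleftrightarrow> C \<subseteq> words n \<and> (\<lambda>_. 0) \<in> C \<and>
     (\<forall>x\<in>C. \<forall>y\<in>C. (\<lambda>k. x k + y k) \<in> C) \<and>
     (\<forall>a::3. \<forall>x\<in>C. (\<lambda>k. a * x k) \<in> C)"

definition inner3 :: "nat \<Rightarrow> (nat \<Rightarrow> 3) \<Rightarrow> (nat \<Rightarrow> 3) \<Rightarrow> 3" where
  "inner3 n x y = (\<Sum>k<n. x k * y k)"

definition dual_code :: "nat \<Rightarrow> (nat \<Rightarrow> 3) set \<Rightarrow> (nat \<Rightarrow> 3) set" where
  "dual_code n C = {y \<in> words n. \<forall>x\<in>C. inner3 n x y = 0}"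

definition self_dual :: "nat \<Rightarrow> (nat \<Rightarrow> 3) set \<Rightarrow> bool" where
  "self_dual n C \<longleftrightarrow> ternary_code n C \<and> dual_code n C = C"

definition wt :: "nat \<Rightarrow> (nat \<Rightarrow> 3) \<Rightarrow> nat" where
  "wt n x = card {k. k < n \<and> x k \<noteq> 0}"

definition min_weight :: "nat \<Rightarrow> (nat \<Rightarrow> 3) set \<Rightarrow> nat" where
  "min_weight n C = Min (wt n ` (C - {\<lambda>_. 0}))"

definition extremal :: "nat \<Rightarrow> (nat \<Rightarrow> 3) set \<Rightarrow> bool" where
  "extremal n C \<longleftrightarrow> self_dual n C \<and> min_weight n C = 3 * (n div 12) + 3"

definition weight_count :: "nat \<Rightarrow> (nat \<Rightarrow> 3) set \<Rightarrow> nat \<Rightarrow> nat" where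
  "weight_count n C j = card {x \<in> C. wt n x = j}"

end

theory Submission imports Defs "HOL-Library.FuncSet" "HOL-Computational_Algebra.Polynomial" begin


lemma coeff_lin_pow:
  "coeff ([:1, 1:] ^ n :: 'a::comm_semiring_1 poly) i = of_nat (n choose i)"
proof (cases "i \<le> n")
  case True thus ?thesis by (simp add: coeff_linear_poly_power)
next
  case False
  have "degree ([:1, 1:] ^ n :: 'a poly) \<le> n"
    by (rule order.trans[OF degree_power_le]) simp
  thus ?thesis using False by (simp add: coeff_eq_0 binomial_eq_0)
qed

lemma binom3_expand:
  "(of_nat (3*t choose v) :: 'a::comm_ring_1) =
     (\<Sum>j\<le>t. of_nat (t choose j) * coeff ([:0,3,3,1:]^j) v)"
proof -
  have e: "([:1,1:] :: 'a poly)^3 = [:0,3,3,1:] + 1"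
    by (simp add: power3_eq_cube numeral_3_eq_3 algebra_simps one_pCons)
  have "(of_nat (3*t choose v) :: 'a) = coeff (([:1,1:]^3)^t) v"
    by (simp only: power_mult[symmetric] coeff_lin_pow)
  also have "\<dots> = coeff (\<Sum>j\<le>t. of_nat (t choose j) * [:0,3,3,1:]^j * 1^(t-j)) v"
    unfolding e by (subst binomial_ring) simp
  also have "\<dots> = (\<Sum>j\<le>t. of_nat (t choose j) * coeff ([:0,3,3,1:]^j) v)"
    by (simp add: coeff_sum of_nat_poly)
  finally show ?thesis .
qed

lemma E_props:
  "coeff ([:0,3,3,1:]^j :: 'a::comm_ring_1 poly) v = (if v < j then 0 else coeff ([:3,3,1:]^j) (v - j))"
proof -
  have "[:0,3,3,1:] = (monom 1 1 :: 'a poly) * [:3,3,1:]"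
    by (simp add: monom_Suc)
  hence "([:0,3,3,1:] :: 'a poly)^j = monom 1 j * [:3,3,1:]^j"
    by (simp only: power_mult_distrib monom_power power_one mult_1)
  thus ?thesis by (simp add: coeff_monom_mult)
qed

lemma E_lt: "v < j \<Longrightarrow> coeff ([:0,3,3,1:]^j :: 'a::comm_ring_1 poly) v = 0"
  by (simp add: E_props)

lemma E_eq: "coeff ([:0,3,3,1:]^j :: 'a::comm_ring_1 poly) j = 3^j"
  by (simp add: E_props coeff_0_power)

lemma main_alg:
  fixes u :: "nat \<Rightarrow> 'a::comm_ring_1"
  assumes inv: "(3::'a)*3 = 1"
    and eq: "\<forall>v<N. (\<Sum>t<N. u t * of_nat (3*t choose v)) = 0"
  shows "\<forall>t<N. u t = 0"
proof -
  define E where "E j v = coeff ([:0,3,3,1:]^j :: 'a poly) v" for j v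
  define q where "q j = (\<Sum>t<N. u t * of_nat (t choose j))" for j
  have qE: "(\<Sum>j<N. q j * E j v) = 0" if "v < N" for v
  proof -
    have "(\<Sum>j<N. q j * E j v) = (\<Sum>j<N. \<Sum>t<N. u t * of_nat (t choose j) * E j v)"
      by (simp add: q_def sum_distrib_right)
    also have "\<dots> = (\<Sum>t<N. u t * (\<Sum>j<N. of_nat (t choose j) * E j v))"
      by (subst sum.swap) (simp add: sum_distrib_left mult.assoc)
    also have "\<dots> = (\<Sum>t<N. u t * of_nat (3*t choose v))"
    proof (rule sum.cong[OF refl])
      fix t assume "t \<in> {..<N}"
      hence "{..t} \<subseteq> {..<N}" by auto
      hence "(\<Sum>j<N. of_nat (t choose j) * E j v) = (\<Sum>j\<le>t. of_nat (t choose j) * E j v)"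
        by (intro sum.mono_neutral_right) (auto simp: binomial_eq_0)
      thus "u t * (\<Sum>j<N. of_nat (t choose j) * E j v) = u t * of_nat (3*t choose v)"
        by (simp add: binom3_expand E_def)
    qed
    also have "\<dots> = 0" using eq that by blast
    finally show ?thesis .
  qed
  have q0: "q j = 0" if "j < N" for j
    using that
  proof (induction j rule: less_induct)
    case (less j)
    have "0 = (\<Sum>i<N. q i * E i j)" using qE less.prems by simp
    also have "\<dots> = (\<Sum>i<N. if i = j then q j * 3^j else 0)"
    proof (rule sum.cong[OF refl])
      fix i assume i: "i \<in> {..<N}"
      show "q i * E i j = (if i = j then q j * 3^j else 0)"
      proof (cases "i < j")
        case True thus ?thesis using less.IH[of i] i by auto
      next
        case False thus ?thesis by (cases "i = j") (auto simp: E_def E_lt E_eq)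
      qed
    qed
    also have "\<dots> = q j * 3^j" using less.prems by simp
    finally have "q j * 3^j = 0" by simp
    hence "q j * 3^j * 3^j = 0" by simp
    moreover have "(3::'a)^j * 3^j = 1"
      by (simp only: power_mult_distrib[symmetric] inv power_one)
    ultimately show ?case by (simp add: mult.assoc)
  qed
  show ?thesis
  proof (intro allI impI)
    fix t assume "t < N"
    thus "u t = 0"
    proof (induction "N - t" arbitrary: t rule: less_induct)
      case (less t)
      have "0 = q t" using q0 less.prems by simp
      also have "\<dots> = (\<Sum>s<N. if s = t then u t else 0)"
        unfolding q_def
      proof (rule sum.cong[OF refl])
        fix s assume s: "s \<in> {..<N}"
        show "u s * of_nat (s choose t) = (if s = t then u t else 0)"
        proof (cases "t < s")
          case True thus ?thesis using less.hyps[of s] s less.prems by auto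
        next
          case False thus ?thesis by (cases "s = t") (auto simp: binomial_eq_0)
        qed
      qed
      also have "\<dots> = u t" using less.prems by simp
      finally show ?case by simp
    qed
  qed
qed


lemma three_cases: "(x::3) = 0 \<or> x = 1 \<or> x = 2"
proof (induct x)
  case (of_int z)
  hence "z = 0 \<or> z = 1 \<or> z = 2" by auto
  thus ?case by auto
qed
lemma sq3: "(x::3) \<noteq> 0 \<Longrightarrow> x * x = 1"
  using three_cases[of x] by auto
lemma of_nat3: "(of_nat k :: 3) = 0 \<longleftrightarrow> 3 dvd k"
  by (simp add: of_nat_eq_0_iff_char_dvd)
lemma of_nat8: "(of_nat k :: 8) = 0 \<longleftrightarrow> 8 dvd k"
  by (simp add: of_nat_eq_0_iff_char_dvd)
lemma nine8: "(9::8) = 1" by simp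
lemma inv8: "(3::8) * 3 = 1" by simp
lemma card_filter_sum: "finite A \<Longrightarrow> (\<Sum>a\<in>A. if P a then 1 else 0) = (of_nat (card {a\<in>A. P a}) :: 'a::comm_semiring_1)"
  by (simp add: sum.inter_filter[symmetric])

definition FS :: "nat set \<Rightarrow> (nat \<Rightarrow> 3) set" where
  "FS S = {v. \<forall>k. k \<notin> S \<longrightarrow> v k = 0}"
definition spans :: "nat set \<Rightarrow> (nat \<Rightarrow> 3) set \<Rightarrow> bool" where
  "spans S C \<longleftrightarrow> (\<forall>v. \<exists>x\<in>C. \<forall>k\<in>S. x k = v k)"
definition van :: "nat set \<Rightarrow> (nat \<Rightarrow> 3) set \<Rightarrow> (nat \<Rightarrow> 3) set" where
  "van S C = {x\<in>C. \<forall>k\<in>S. x k = 0}"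

lemma my_bw: "(\<forall>a\<in>A. g (f a) = a) \<Longrightarrow> (\<forall>b\<in>B. f (g b) = b) \<Longrightarrow> f ` A \<subseteq> B \<Longrightarrow> g ` B \<subseteq> A \<Longrightarrow> bij_betw f A B"
  by (rule bij_betw_byWitness)

lemma FS_bij: "bij_betw (\<lambda>v. restrict v S) (FS S) (PiE S (\<lambda>_. UNIV))"
proof -
  define g where "g = (\<lambda>(f::nat\<Rightarrow>3) (k::nat). if k \<in> S then f k else (0::3))"
  show ?thesis
  proof (rule my_bw[where g=g])
    show "\<forall>a\<in>FS S. g (restrict a S) = a"
      by (auto simp: FS_def fun_eq_iff g_def)
    show "\<forall>a'\<in>PiE S (\<lambda>_. UNIV). restrict (g a') S = a'"
    proof
      fix a' assume "a' \<in> PiE S (\<lambda>_. UNIV :: 3 set)"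
      hence "\<forall>k. k \<notin> S \<longrightarrow> a' k = undefined" by (simp add: PiE_iff extensional_def)
      thus "restrict (g a') S = a'" by (simp add: g_def restrict_def fun_eq_iff)
    qed
    show "(\<lambda>v. restrict v S) ` FS S \<subseteq> PiE S (\<lambda>_. UNIV)" by auto
    show "g ` PiE S (\<lambda>_. UNIV) \<subseteq> FS S"
      unfolding FS_def g_def by auto
  qed
qed

lemma card_FS:
  assumes "finite S" shows "card (FS S) = 3 ^ card S" "finite (FS S)"
proof -
  have "card (FS S) = card (PiE S (\<lambda>_. UNIV :: 3 set))" using bij_betw_same_card[OF FS_bij] .
  also have "\<dots> = 3 ^ card S" using assms by (simp add: card_PiE)
  finally show "card (FS S) = 3 ^ card S" .
  show "finite (FS S)" using bij_betw_finite[OF FS_bij] assms by (simp add: finite_PiE)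
qed

lemma words_FS: "words n = FS {..<n}"
  by (auto simp: words_def FS_def)

context
  fixes n :: nat and C :: "(nat \<Rightarrow> 3) set"
  assumes tc: "ternary_code n C"
begin

lemma c0: "(\<lambda>_. 0) \<in> C" using tc by (simp add: ternary_code_def)
lemma cadd: "x \<in> C \<Longrightarrow> y \<in> C \<Longrightarrow> (\<lambda>k. x k + y k) \<in> C" using tc by (simp add: ternary_code_def)
lemma csmul: "x \<in> C \<Longrightarrow> (\<lambda>k. a * x k) \<in> C" using tc by (simp add: ternary_code_def)
lemma cdiff: "x \<in> C \<Longrightarrow> y \<in> C \<Longrightarrow> (\<lambda>k. x k - y k) \<in> C"
  using cadd[OF _ csmul[of y "-1"], of x] by simp
lemma csum: "finite I \<Longrightarrow> (\<And>i. i \<in> I \<Longrightarrow> f i \<in> C) \<Longrightarrow> (\<lambda>k. \<Sum>i\<in>I. f i k) \<in> C"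
proof (induction I rule: finite_induct)
  case empty thus ?case using c0 by simp
next
  case (insert a I)
  have "(\<lambda>k. f a k + (\<Sum>i\<in>I. f i k)) \<in> C"
    using insert by (intro cadd) auto
  thus ?case using insert(1,2) by (simp add: sum.insert)
qed
lemma cwords: "C \<subseteq> words n" using tc by (simp add: ternary_code_def)
lemma cfinite: "finite C"
  using cwords card_FS(2)[of "{..<n}"] unfolding words_FS by (rule finite_subset) auto

lemma extend:
  assumes sp: "spans S C" and x0: "x0 \<in> C" "\<forall>k\<in>S. x0 k = 0" "x0 a \<noteq> 0"
  shows "spans (insert a S) C"
  unfolding spans_def
proof
  fix v
  obtain x' where x': "x' \<in> C" "\<forall>k\<in>S. x' k = v k" using sp by (auto simp: spans_def)
  define c where "c = (v a - x' a) * x0 a"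
  have "(\<lambda>k. x' k + c * x0 k) \<in> C" using cadd[OF x'(1) csmul[OF x0(1)]] .
  moreover have "\<forall>k\<in>insert a S. x' k + c * x0 k = v k"
  proof
    fix k assume "k \<in> insert a S"
    then consider "k = a" | "k \<in> S" by auto
    thus "x' k + c * x0 k = v k"
    proof cases
      case 1
      have "x0 a * x0 a = 1" using sq3 x0(3) by simp
      have "c * x0 a = (v a - x' a) * (x0 a * x0 a)" unfolding c_def by (rule mult.assoc)
      hence "c * x0 a = v a - x' a" using \<open>x0 a * x0 a = 1\<close> by simp
      thus ?thesis using 1 by simp
    next
      case 2 thus ?thesis using x' x0 by simp
    qed
  qed
  ultimately show "\<exists>x\<in>C. \<forall>k\<in>insert a S. x k = v k"
    by (intro bexI[of _ "\<lambda>k. x' k + c * x0 k"]) simp_all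
qed


lemma spans_empty: "spans {} C"
  unfolding spans_def using c0 by auto

lemma dual_vec:
  assumes "finite S" "\<not> spans S C"
  shows "\<exists>y. (\<exists>k. y k \<noteq> 0) \<and> (\<forall>k. k \<notin> S \<longrightarrow> y k = 0) \<and> (\<forall>x\<in>C. (\<Sum>k\<in>S. x k * y k) = 0)"
  using assms
proof (induction S rule: finite_induct)
  case empty
  thus ?case using spans_empty by simp
next
  case (insert a S)
  show ?case
  proof (cases "spans S C")
    case False
    from insert.IH[OF False] obtain y where
      y: "\<exists>k. y k \<noteq> 0" "\<forall>k. k \<notin> S \<longrightarrow> y k = 0" "\<forall>x\<in>C. (\<Sum>k\<in>S. x k * y k) = 0"
      by blast
    have ya: "y a = 0" using y(2) insert(2) by simp
    show ?thesis
    proof (rule exI[of _ y], intro conjI)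
      show "\<exists>k. y k \<noteq> 0" by (rule y(1))
      show "\<forall>k. k \<notin> insert a S \<longrightarrow> y k = 0" using y(2) by simp
      show "\<forall>x\<in>C. (\<Sum>k\<in>insert a S. x k * y k) = 0"
        using y(3) ya insert(1,2) by (simp add: sum.insert)
    qed
  next
    case True
    note spS = True
    show ?thesis
    proof (cases "\<exists>x0\<in>C. (\<forall>k\<in>S. x0 k = 0) \<and> x0 a \<noteq> 0")
      case True
      then obtain x0 where "x0 \<in> C" "\<forall>k\<in>S. x0 k = 0" "x0 a \<noteq> 0" by blast
      hence "spans (insert a S) C" using extend[OF spS] by blast
      thus ?thesis using insert.prems by simp
    next
      case False
      hence vanish: "\<And>x. x \<in> C \<Longrightarrow> \<forall>k\<in>S. x k = 0 \<Longrightarrow> x a = 0" by auto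
      define e where "e s = (\<lambda>k::nat. if k = s then 1 else (0::3))" for s
      have "\<forall>s. \<exists>z. z \<in> C \<and> (\<forall>k\<in>S. z k = e s k)"
        using spS unfolding spans_def by blast
      from choice[OF this] obtain z where z: "\<And>s. z s \<in> C" "\<And>s k. k \<in> S \<Longrightarrow> z s k = e s k"
        by blast
      define y where "y = (\<lambda>k. if k = a then 1 else if k \<in> S then - z k a else (0::3))"
      show ?thesis
      proof (rule exI[of _ y], intro conjI)
        show "\<exists>k. y k \<noteq> 0" by (rule exI[of _ a]) (simp add: y_def)
        show "\<forall>k. k \<notin> insert a S \<longrightarrow> y k = 0" by (simp add: y_def)
        show "\<forall>x\<in>C. (\<Sum>k\<in>insert a S. x k * y k) = 0"
        proof
          fix x assume x: "x \<in> C"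
          define w where "w = (\<lambda>k. x k - (\<Sum>s\<in>S. x s * z s k))"
          have "(\<lambda>k. \<Sum>s\<in>S. x s * z s k) \<in> C"
            using csum[of S "\<lambda>s k. x s * z s k", OF insert(1)] csmul[OF z(1)] by blast
          hence wC: "w \<in> C" unfolding w_def by (rule cdiff[OF x])
          have "\<forall>k\<in>S. w k = 0"
          proof
            fix k assume k: "k \<in> S"
            have "(\<Sum>s\<in>S. x s * z s k) = (\<Sum>s\<in>S. if s = k then x s else 0)"
              by (rule sum.cong[OF refl]) (simp add: z(2)[OF k] e_def)
            also have "\<dots> = x k" using k insert(1) by simp
            finally show "w k = 0" by (simp add: w_def)
          qed
          hence "w a = 0" using vanish[OF wC] by simp
          hence xa: "x a = (\<Sum>s\<in>S. x s * z s a)" by (simp add: w_def)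
          have "(\<Sum>k\<in>S. x k * y k) = (\<Sum>k\<in>S. - (x k * z k a))"
            by (rule sum.cong[OF refl]) (use insert(2) in \<open>auto simp: y_def\<close>)
          also have "\<dots> = - x a" using xa by (simp add: sum_negf)
          finally have "(\<Sum>k\<in>S. x k * y k) = - x a" .
          moreover have "y a = 1" by (simp add: y_def)
          ultimately show "(\<Sum>k\<in>insert a S. x k * y k) = 0"
            using insert(1,2) by (simp add: sum.insert)
        qed
      qed
    qed
  qed
qed

lemma fiber_card:
  assumes sp: "spans S C" and fin: "finite S"
  shows "card C = 3 ^ card S * card (van S C)"
proof -
  define sec where "sec v = (SOME x. x \<in> C \<and> (\<forall>k\<in>S. x k = v k))" for v
  have sec: "sec v \<in> C \<and> (\<forall>k\<in>S. sec v k = v k)" for v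
  proof -
    have ex: "\<exists>x. x \<in> C \<and> (\<forall>k\<in>S. x k = v k)" using sp unfolding spans_def by blast
    show ?thesis unfolding sec_def by (rule someI_ex[OF ex])
  qed
  define r where "r x = (\<lambda>k. if k \<in> S then x k else 0)" for x :: "nat \<Rightarrow> 3"
  define phi where "phi x = (r x, (\<lambda>k. x k - sec (r x) k))" for x
  define psi where "psi p = (\<lambda>k. sec (fst p) k + snd p k)" for p :: "(nat \<Rightarrow> 3) \<times> (nat \<Rightarrow> 3)"
  have "bij_betw phi C (FS S \<times> van S C)"
  proof (rule my_bw[where g=psi])
    show "\<forall>a\<in>C. psi (phi a) = a" by (simp add: psi_def phi_def)
    show "\<forall>b\<in>FS S \<times> van S C. phi (psi b) = b"
    proof
      fix b assume b: "b \<in> FS S \<times> van S C"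
      obtain v w where vw: "b = (v, w)" by (cases b)
      have v: "\<forall>k. k \<notin> S \<longrightarrow> v k = 0" and w: "w \<in> C" "\<forall>k\<in>S. w k = 0"
        using b vw by (auto simp: FS_def van_def)
      have "r (psi b) = v"
        using v w sec[of v] by (auto simp: r_def psi_def vw fun_eq_iff)
      thus "phi (psi b) = b" by (simp add: phi_def vw psi_def)
    qed
    show "phi ` C \<subseteq> FS S \<times> van S C"
    proof
      fix p assume "p \<in> phi ` C"
      then obtain x where x: "x \<in> C" "p = phi x" by blast
      have "(\<lambda>k. x k - sec (r x) k) \<in> C" using cdiff[OF x(1)] sec by blast
      moreover have "\<forall>k\<in>S. x k - sec (r x) k = 0" using sec[of "r x"] by (simp add: r_def)
      ultimately show "p \<in> FS S \<times> van S C"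
        by (simp add: x(2) phi_def FS_def van_def r_def)
    qed
    show "psi ` (FS S \<times> van S C) \<subseteq> C"
    proof
      fix x assume "x \<in> psi ` (FS S \<times> van S C)"
      then obtain v w where "w \<in> van S C" "x = psi (v, w)" by blast
      thus "x \<in> C" using cadd[of "sec v" w] sec[of v] by (simp add: psi_def van_def)
    qed
  qed
  hence "card C = card (FS S \<times> van S C)" by (rule bij_betw_same_card)
  thus ?thesis using card_FS[OF fin] by (simp add: card_cartesian_product)
qed

end

lemma four_dvd_binom:
  assumes "odd v" shows "4 dvd (12 * m choose v)"
proof -
  have v0: "0 < v" using assms by (cases v) auto
  have "v * (12 * m choose v) = 12 * m * ((12 * m - 1) choose (v - 1))"
    using times_binomial_minus1_eq[OF v0] .
  hence "4 dvd v * (12 * m choose v)" by simp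
  moreover have "coprime (4::nat) v"
  proof -
    have "coprime (2::nat) v" using assms by (simp add: coprime_left_2_iff_odd)
    hence "coprime ((2::nat)^2) v" by (subst coprime_power_left_iff) simp
    thus ?thesis by simp
  qed
  ultimately show ?thesis by (simp add: coprime_dvd_mult_right_iff)
qed

lemma three_pow8: "(3::8)^e = (if even e then 1 else 3)"
proof -
  have "(3::8)^(2*k) = 1" for k by (simp add: power_mult nine8)
  moreover have "(3::8)^(2*k+1) = 3" for k by (simp add: power_mult nine8)
  ultimately show ?thesis by (cases "even e") (auto elim!: evenE oddE)
qed

lemma rhs_zero8:
  "(of_nat (12 * m choose v) :: 8) * 3 ^ e - of_nat (12 * m choose v) = 0" if "even v = even e"
proof (cases "even v")
  case True thus ?thesis using that by (simp add: three_pow8)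
next
  case False
  then obtain c where c: "12 * m choose v = 4 * c" using four_dvd_binom by blast
  have "(of_nat (4 * c) :: 8) * 3 - of_nat (4 * c) = of_nat c * 8" by (simp add: algebra_simps)
  also have "\<dots> = of_nat (c * 8)" by simp
  also have "\<dots> = 0" by (simp only: of_nat8) simp
  finally show ?thesis using that False c by (simp add: three_pow8)
qed

context
  fixes m :: nat and C :: "(nat \<Rightarrow> 3) set"
  assumes mpos: "m > 0" and ext: "extremal (12 * m) C"
begin

lemma tcC: "ternary_code (12*m) C" using ext by (simp add: extremal_def self_dual_def)
lemma dualC: "dual_code (12*m) C = C" using ext by (simp add: extremal_def self_dual_def)
lemma finC: "finite C" using cfinite[OF tcC] .
lemma wordsC: "x \<in> C \<Longrightarrow> k \<ge> 12*m \<Longrightarrow> x k = 0"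
  using cwords[OF tcC] by (auto simp: words_def)

lemma orth: "x \<in> C \<Longrightarrow> y \<in> C \<Longrightarrow> inner3 (12*m) x y = 0"
  using dualC by (auto simp: dual_code_def)

lemma indual: "y \<in> words (12*m) \<Longrightarrow> \<forall>x\<in>C. inner3 (12*m) x y = 0 \<Longrightarrow> y \<in> C"
  using dualC by (auto simp: dual_code_def)

lemma mw: "x \<in> C \<Longrightarrow> x \<noteq> (\<lambda>_. 0) \<Longrightarrow> 3*m+3 \<le> wt (12*m) x"
proof -
  assume x: "x \<in> C" "x \<noteq> (\<lambda>_. 0)"
  have "min_weight (12*m) C = 3*m+3" using ext by (simp add: extremal_def)
  moreover have "min_weight (12*m) C \<le> wt (12*m) x"
    unfolding min_weight_def using finC x by (intro Min_le) auto
  ultimately show ?thesis by simp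
qed

lemma inner_supp:
  assumes "S \<subseteq> {..<12*m}" "\<forall>k. k \<notin> S \<longrightarrow> y k = 0"
  shows "inner3 (12*m) x y = (\<Sum>k\<in>S. x k * y k)"
  unfolding inner3_def using assms by (intro sum.mono_neutral_right) auto

lemma wt_le_supp:
  assumes "finite S" "\<forall>k. k \<notin> S \<longrightarrow> y k = 0"
  shows "wt (12*m) y \<le> card S"
  unfolding wt_def using assms by (intro card_mono) auto

lemma wt_zero: "x \<in> C \<Longrightarrow> wt (12*m) x = 0 \<Longrightarrow> x = (\<lambda>_. 0)"
proof -
  assume x: "x \<in> C" "wt (12*m) x = 0"
  have "{k. k < 12*m \<and> x k \<noteq> 0} = {}"
    using x(2) unfolding wt_def by (subst (asm) card_0_eq) auto
  thus ?thesis using wordsC[OF x(1)] by (auto simp: fun_eq_iff not_less)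
qed

lemma wt_le: "wt (12*m) x \<le> 12*m"
  unfolding wt_def by (rule order.trans[OF card_mono[of "{..<12*m}"]]) auto

lemma spans_small:
  assumes S: "S \<subseteq> {..<12*m}" "card S < 3*m+3"
  shows "spans S C"
proof (rule ccontr)
  assume "\<not> spans S C"
  have finS: "finite S" using S(1) finite_subset by blast
  obtain y where y: "\<exists>k. y k \<noteq> 0" "\<forall>k. k \<notin> S \<longrightarrow> y k = 0" "\<forall>x\<in>C. (\<Sum>k\<in>S. x k * y k) = 0"
    using dual_vec[OF tcC finS \<open>\<not> spans S C\<close>] by blast
  have yw: "y \<in> words (12*m)" using y(2) S(1) by (auto simp: words_def)
  have "y \<in> C" using indual[OF yw] y(3) inner_supp[OF S(1) y(2)] by simp
  moreover have "y \<noteq> (\<lambda>_. 0)" using y(1) by auto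
  ultimately have "3*m+3 \<le> wt (12*m) y" by (rule mw)
  moreover have "wt (12*m) y \<le> card S" using wt_le_supp[OF finS y(2)] .
  ultimately show False using S(2) by simp
qed

lemma cardC: "card C = 3 ^ (6*m)"
proof -
  define F where "F = {S. S \<subseteq> {..<12*m} \<and> spans S C}"
  have finF: "finite F" unfolding F_def by (rule finite_subset[of _ "Pow {..<12*m}"]) auto
  have "{} \<in> F" unfolding F_def using spans_empty[OF tcC] by simp
  hence ne: "card ` F \<noteq> {}" by blast
  obtain S0 where S0F: "S0 \<in> F" and S0c: "card S0 = Max (card ` F)"
    using Max_in[OF finite_imageI[OF finF] ne] by auto
  have S0: "S0 \<subseteq> {..<12*m}" "spans S0 C" using S0F by (auto simp: F_def)
  have finS0: "finite S0" using S0(1) finite_subset by blast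
  have maxS0: "card S \<le> card S0" if "S \<subseteq> {..<12*m}" "spans S C" for S
    unfolding S0c using that by (intro Max_ge finite_imageI finF imageI) (simp add: F_def)
  have van0: "van S0 C = {\<lambda>_. 0}"
  proof
    show "{\<lambda>_. 0} \<subseteq> van S0 C" using c0[OF tcC] by (simp add: van_def)
    show "van S0 C \<subseteq> {\<lambda>_. 0}"
    proof
      fix x assume "x \<in> van S0 C"
      hence x: "x \<in> C" "\<forall>k\<in>S0. x k = 0" by (auto simp: van_def)
      show "x \<in> {\<lambda>_. 0}"
      proof (rule ccontr)
        assume "x \<notin> {\<lambda>_. 0}"
        then obtain a where a: "x a \<noteq> 0" by (auto simp: fun_eq_iff)
        have "a < 12*m" using wordsC[OF x(1)] a by (meson not_less)
        moreover have "a \<notin> S0" using x(2) a by auto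
        moreover have "spans (insert a S0) C" using extend[OF tcC S0(2) x(1) x(2) a] .
        ultimately have "card (insert a S0) \<le> card S0" using S0(1) by (intro maxS0) auto
        thus False using finS0 \<open>a \<notin> S0\<close> by simp
      qed
    qed
  qed
  have c1: "card C = 3 ^ card S0" using fiber_card[OF tcC S0(2) finS0] van0 by simp
  define T where "T = {..<12*m} - S0"
  have finT: "finite T" unfolding T_def by simp
  have T_sub: "T \<subseteq> {..<12*m}" unfolding T_def by auto
  have spT: "spans T C"
  proof (rule ccontr)
    assume "\<not> spans T C"
    obtain y where y: "\<exists>k. y k \<noteq> 0" "\<forall>k. k \<notin> T \<longrightarrow> y k = 0" "\<forall>x\<in>C. (\<Sum>k\<in>T. x k * y k) = 0"
      using dual_vec[OF tcC finT \<open>\<not> spans T C\<close>] by blast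
    have yw: "y \<in> words (12*m)" using y(2) T_sub by (auto simp: words_def)
    have "y \<in> C" using indual[OF yw] y(3) inner_supp[OF T_sub y(2)] by simp
    moreover have "\<forall>k\<in>S0. y k = 0" using y(2) by (auto simp: T_def)
    ultimately have "y \<in> van S0 C" by (simp add: van_def)
    hence "y = (\<lambda>_. 0)" using van0 by simp
    thus False using y(1) by simp
  qed
  have vanT: "van T C = {\<lambda>_. 0}"
  proof
    show "{\<lambda>_. 0} \<subseteq> van T C" using c0[OF tcC] by (simp add: van_def)
    show "van T C \<subseteq> {\<lambda>_. 0}"
    proof
      fix x assume "x \<in> van T C"
      hence x: "x \<in> C" "\<forall>k\<in>T. x k = 0" by (auto simp: van_def)
      have out: "\<forall>k. k \<notin> S0 \<longrightarrow> x k = 0"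
      proof (intro allI impI)
        fix k assume "k \<notin> S0"
        show "x k = 0"
        proof (cases "k < 12*m")
          case True thus ?thesis using x(2) \<open>k \<notin> S0\<close> by (auto simp: T_def)
        next
          case False thus ?thesis using wordsC[OF x(1)] by simp
        qed
      qed
      have "x s = 0" if s: "s \<in> S0" for s
      proof -
        from S0(2)[unfolded spans_def, rule_format, of "\<lambda>j. if j = s then 1 else 0"]
        obtain z where z: "z \<in> C" "\<forall>j\<in>S0. z j = (if j = s then 1 else 0)"
          by auto
        have "0 = inner3 (12*m) z x" using orth[OF z(1) x(1)] by simp
        also have "\<dots> = (\<Sum>j\<in>S0. z j * x j)" using inner_supp[OF S0(1) out] .
        also have "\<dots> = (\<Sum>j\<in>S0. if j = s then x j else 0)"
          by (rule sum.cong[OF refl]) (simp add: z(2))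
        also have "\<dots> = x s" using s finS0 by simp
        finally show ?thesis by simp
      qed
      hence "x = (\<lambda>_. 0)" using out by (auto simp: fun_eq_iff)
      thus "x \<in> {\<lambda>_. 0}" by simp
    qed
  qed
  have c2: "card C = 3 ^ card T" using fiber_card[OF tcC spT finT] vanT by simp
  have "card T = 12*m - card S0" unfolding T_def using S0(1) finS0 by (simp add: card_Diff_subset)
  moreover have "card S0 = card T" using c1 c2 by simp
  moreover have "card S0 \<le> 12*m" using card_mono[OF _ S0(1)] by simp
  ultimately have "card S0 = 6*m" by simp
  thus ?thesis using c1 by simp
qed


lemma van_card:
  assumes S: "S \<subseteq> {..<12*m}" "card S \<le> 3*m+2"
  shows "card (van S C) = 3 ^ (6*m - card S)"
proof -
  have finS: "finite S" using S(1) finite_subset by blast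
  have "3 ^ (6*m) = 3 ^ card S * card (van S C)"
    using fiber_card[OF tcC spans_small[OF S(1)] finS] S(2) cardC by simp
  moreover have "(3::nat) ^ (6*m) = 3 ^ card S * 3 ^ (6*m - card S)"
    using S(2) mpos by (simp flip: power_add)
  ultimately show ?thesis by simp
qed

lemma zeros_card:
  "card {k. k < 12*m \<and> x k = 0} = 12*m - wt (12*m) x"
proof -
  have e: "{k. k < 12*m \<and> x k = 0} = {..<12*m} - {k. k < 12*m \<and> x k \<noteq> 0}" by auto
  have fin: "finite {k. k < 12*m \<and> x k \<noteq> 0}" by simp
  have sub: "{k. k < 12*m \<and> x k \<noteq> 0} \<subseteq> {..<12*m}" by auto
  show ?thesis unfolding wt_def e card_Diff_subset[OF fin sub] by simp
qed

lemma pless: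
  assumes v: "v \<le> 3*m+2"
  shows "(\<Sum>x\<in>C. (12*m - wt (12*m) x) choose v) = (12*m choose v) * 3 ^ (6*m - v)"
proof -
  define P where "P = {S. S \<subseteq> {..<12*m} \<and> card S = v}"
  have finP: "finite P" unfolding P_def by (rule finite_subset[of _ "Pow {..<12*m}"]) auto
  have "(\<Sum>x\<in>C. (12*m - wt (12*m) x) choose v) = (\<Sum>x\<in>C. card {S\<in>P. \<forall>k\<in>S. x k = 0})"
  proof (rule sum.cong[OF refl])
    fix x assume "x \<in> C"
    have "{S\<in>P. \<forall>k\<in>S. x k = 0} = {S. S \<subseteq> {k. k < 12*m \<and> x k = 0} \<and> card S = v}"
      unfolding P_def by auto
    hence "card {S\<in>P. \<forall>k\<in>S. x k = 0} = card {k. k < 12*m \<and> x k = 0} choose v"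
      by (simp add: n_subsets)
    thus "(12*m - wt (12*m) x) choose v = card {S\<in>P. \<forall>k\<in>S. x k = 0}"
      by (simp add: zeros_card)
  qed
  also have "\<dots> = (\<Sum>x\<in>C. \<Sum>S\<in>P. if \<forall>k\<in>S. x k = 0 then 1 else 0)"
    using finP by (simp add: card_filter_sum)
  also have "\<dots> = (\<Sum>S\<in>P. \<Sum>x\<in>C. if \<forall>k\<in>S. x k = 0 then 1 else 0)"
    by (rule sum.swap)
  also have "\<dots> = (\<Sum>S\<in>P. card (van S C))"
    using finC by (simp add: card_filter_sum van_def)
  also have "\<dots> = (\<Sum>S\<in>P. 3 ^ (6*m - v))"
    by (rule sum.cong[OF refl]) (use v in \<open>auto simp: P_def van_card\<close>)
  also have "\<dots> = (12*m choose v) * 3 ^ (6*m - v)"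
    by (simp add: P_def n_subsets)
  finally show ?thesis .
qed

lemma wt3: "x \<in> C \<Longrightarrow> 3 dvd wt (12*m) x"
proof -
  assume x: "x \<in> C"
  have "0 = inner3 (12*m) x x" using orth[OF x x] by simp
  also have "\<dots> = (\<Sum>k<12*m. if x k \<noteq> 0 then 1 else 0)"
    unfolding inner3_def by (rule sum.cong[OF refl]) (simp add: sq3)
  also have "\<dots> = of_nat (card {k\<in>{..<12*m}. x k \<noteq> 0})" by (simp add: card_filter_sum)
  also have "{k\<in>{..<12*m}. x k \<noteq> 0} = {k. k < 12*m \<and> x k \<noteq> 0}" by auto
  finally have "(of_nat (wt (12*m) x) :: 3) = 0" unfolding wt_def by simp
  thus ?thesis by (simp add: of_nat3)
qed

lemma wc0: "weight_count (12*m) C 0 = 1"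
proof -
  have "{x\<in>C. wt (12*m) x = 0} = {\<lambda>_. 0}"
  proof
    show "{x\<in>C. wt (12*m) x = 0} \<subseteq> {\<lambda>_. 0}" using wt_zero by auto
    show "{\<lambda>_. 0} \<subseteq> {x\<in>C. wt (12*m) x = 0}" using c0[OF tcC] by (simp add: wt_def)
  qed
  thus ?thesis by (simp add: weight_count_def)
qed

lemma wc_zero:
  assumes "w \<noteq> 0" "w < 3*m+3 \<or> \<not> 3 dvd w"
  shows "weight_count (12*m) C w = 0"
proof -
  have E: "{x\<in>C. wt (12*m) x = w} = {}"
  proof (rule ccontr)
    assume "{x\<in>C. wt (12*m) x = w} \<noteq> {}"
    then obtain x where x: "x \<in> C" "wt (12*m) x = w" by blast
    have "x \<noteq> (\<lambda>_. 0)" using x assms(1) by (auto simp: wt_def)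
    hence "3*m+3 \<le> w" using mw[OF x(1)] x(2) by simp
    moreover have "3 dvd w" using wt3[OF x(1)] x(2) by simp
    ultimately show False using assms(2) by simp
  qed
  show ?thesis unfolding weight_count_def E by simp
qed

lemma weight_sum:
  "(\<Sum>x\<in>C. g (wt (12*m) x)) = g 0 + (\<Sum>t<3*m. weight_count (12*m) C (12*m - 3*t) * g (12*m - 3*t))"
proof -
  define h where "h w = weight_count (12*m) C w * g w" for w
  have "(\<Sum>x\<in>C. g (wt (12*m) x)) = (\<Sum>w\<in>{..12*m}. \<Sum>x\<in>{x\<in>C. wt (12*m) x = w}. g (wt (12*m) x))"
    using finC wt_le by (intro sum.group[symmetric]) auto
  also have "\<dots> = (\<Sum>w\<in>{..12*m}. h w)"
    by (rule sum.cong[OF refl]) (simp add: h_def weight_count_def)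
  also have "\<dots> = (\<Sum>w\<in>insert 0 ((\<lambda>t. 12*m - 3*t) ` {..<3*m}). h w)"
  proof (rule sum.mono_neutral_right)
    show "finite {..12*m}" by simp
    show "insert 0 ((\<lambda>t. 12*m - 3*t) ` {..<3*m}) \<subseteq> {..12*m}" by auto
    show "\<forall>w\<in>{..12*m} - insert 0 ((\<lambda>t. 12*m - 3*t) ` {..<3*m}). h w = 0"
    proof
      fix w assume w: "w \<in> {..12*m} - insert 0 ((\<lambda>t. 12*m - 3*t) ` {..<3*m})"
      have "w < 3*m+3 \<or> \<not> 3 dvd w"
      proof (rule ccontr)
        assume "\<not> (w < 3*m+3 \<or> \<not> 3 dvd w)"
        then obtain i where i: "w = 3*i" "3*m+3 \<le> 3*i" by auto
        have "w = 12*m - 3*(4*m - i)" "4*m - i < 3*m" using i w by auto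
        hence "w \<in> (\<lambda>t. 12*m - 3*t) ` {..<3*m}" by blast
        thus False using w by blast
      qed
      thus "h w = 0" using w wc_zero by (auto simp: h_def)
    qed
  qed
  also have "\<dots> = h 0 + (\<Sum>w\<in>(\<lambda>t. 12*m - 3*t) ` {..<3*m}. h w)"
    by (rule sum.insert) auto
  also have "(\<Sum>w\<in>(\<lambda>t. 12*m - 3*t) ` {..<3*m}. h w) = (\<Sum>t<3*m. h (12*m - 3*t))"
    by (rule sum.reindex_cong[OF _ refl refl]) (auto simp: inj_on_def)
  finally show ?thesis by (simp add: h_def wc0)
qed

lemma main_mod8: "t < 3*m \<Longrightarrow> 8 dvd weight_count (12*m) C (12*m - 3*t)"
proof -
  define u where "u t = weight_count (12*m) C (12*m - 3*t)" for t
  have eq: "(\<Sum>t<3*m. (of_nat (u t) :: 8) * of_nat (3*t choose v)) = 0" if v: "v < 3*m" for v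
  proof -
    have "(\<Sum>x\<in>C. (12*m - wt (12*m) x) choose v) =
          (12*m choose v) + (\<Sum>t<3*m. u t * (3*t choose v))"
    proof -
      have "(\<Sum>x\<in>C. (12*m - wt (12*m) x) choose v) =
            ((12*m - 0) choose v) + (\<Sum>t<3*m. u t * ((12*m - (12*m - 3*t)) choose v))"
        unfolding u_def using weight_sum[where g="\<lambda>w. (12*m - w) choose v"] by (simp only:)
      also have "(\<Sum>t<3*m. u t * ((12*m - (12*m - 3*t)) choose v)) = (\<Sum>t<3*m. u t * (3*t choose v))"
        by (rule sum.cong[OF refl]) auto
      finally show ?thesis by simp
    qed
    hence N: "(12*m choose v) + (\<Sum>t<3*m. u t * (3*t choose v)) = (12*m choose v) * 3 ^ (6*m - v)"
      using pless[of v] v by simp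
    hence "(of_nat ((12*m choose v) + (\<Sum>t<3*m. u t * (3*t choose v))) :: 8) =
           of_nat ((12*m choose v) * 3 ^ (6*m - v))" by (rule arg_cong)
    hence "(of_nat (12*m choose v) :: 8) + (\<Sum>t<3*m. of_nat (u t) * of_nat (3*t choose v)) =
           of_nat (12*m choose v) * 3 ^ (6*m - v)" by simp
    hence "(\<Sum>t<3*m. (of_nat (u t) :: 8) * of_nat (3*t choose v)) =
           of_nat (12*m choose v) * 3 ^ (6*m - v) - of_nat (12*m choose v)"
      by (simp add: algebra_simps)
    also have "\<dots> = 0"
      by (rule rhs_zero8) (use v in auto)
    finally show ?thesis .
  qed
  have "\<forall>t<3*m. (of_nat (u t) :: 8) = 0"
    by (rule main_alg[OF inv8]) (use eq in blast)
  thus "t < 3*m \<Longrightarrow> 8 dvd weight_count (12*m) C (12*m - 3*t)"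
    by (simp add: u_def of_nat8)
qed

end

theorem corollary3p3:
  fixes m :: nat and C :: "(nat \<Rightarrow> 3) set"
  assumes "m > 0"
    and "extremal (12 * m) C"
  shows "\<forall>i \<in> {m+1..4*m}. weight_count (12 * m) C (3 * i) mod 8 = 0"
proof
  fix i assume i: "i \<in> {m+1..4*m}"
  hence "4*m - i < 3*m" "12*m - 3*(4*m - i) = 3*i" by auto
  thus "weight_count (12 * m) C (3 * i) mod 8 = 0"
    using main_mod8[OF assms, of "4*m - i"] by simp
qed

end
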